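(* Let $\mathcal{S}=(\mathbb{Z}_n,\mathcal{S}_1,\dots,\mathcal{S}_4)$ be a cyclic triomino set with $\gcd(n,6)=1$, and let $m$, the filler $F$ and the brick $B$ be as defined below. Suppose $W\subset\{((3m+2)x,5y,6z): x,y,z\in\mathbb{Z}\}$ satisfies $W+(0,0,6n)=W$, $W\oplus B$ is non-overlapping, and $F$ tiles $\mathbb{Z}^3\setminus(W\oplus B)$. Then the $\mathcal{S}$-cyclic triomino problem is solvable.
   Context: Cyclic triomino set: $\mathcal{S}_i\subset\mathbb{Z}_n^3$ invariant under $(a,b,c)\mapsto(a+k,b+k,c+k)$ for all $k$; with $u_1=(1,0),u_2=(0,1),u_3=(-1,0),u_4=(0,-1)$ (indices mod 4), the $\mathcal{S}$-cyclic triomino problem is solvable if some $\mathcal{T}:\mathbb{Z}^2\to\mathbb{Z}_n$ has $(\mathcal{T}(s),\mathcal{T}(s+u_i),\mathcal{T}(s+u_{i+1}))\in\mathcal{S}_i$ for all $s$, $1\le i\le4$. $A\oplus B=\{a+b\}$, non-overlapping if each sum has a unique representation; $P$ tiles $E$ if $W'\oplus P=E$ non-overlapping for some $W'$; $cA=\{ca\}$; $I_{a,b}=\{x\in\mathbb{Z}: a\le x\le b\}$. Blockers (subsets of $\mathbb{Z}$): $\alpha_0=\emptyset,\alpha_1=\{0,5\}$, $\beta_0=\{1,4\},\beta_1=\emptyset$, $\gamma_0=\emptyset,\gamma_1=\{2,3\}$. With $\delta(0)=1$, $\delta(i)=0$ for $i\ne0$: $\alpha_T=\bigcup_{i=0}^{n-1}(n\alpha_{\delta(i)}+6i)$,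 and $\beta_T,\gamma_T$ likewise. $O=\{-1,0,1\}^2\setminus\{(0,0)\}$; filler $F=O\times\{0,n\}$. For each $i$ let $\overline{K_i}\subset\mathbb{Z}_n^3$ be a set of representatives with $\overline{K_i}\oplus\{(k,k,k):k\in\mathbb{Z}_n\}$ non-overlapping and equal to $\mathbb{Z}_n^3\setminus\mathcal{S}_i$; entries of $\mathbb{Z}_n$ are identified with integers in $\{0,\dots,n-1\}$. Let $m=\sum_{i=1}^4|\overline{K_i}|$ and list the elements of $\overline{K_1},\overline{K_2},\overline{K_3},\overline{K_4}$ in order as $(a_1,b_1,c_1),\dots,(a_m,b_m,c_m)$, with $(a_i,b_i,c_i)\in\overline{K_{g(i)}}$. Empty brick $B_0=I_{0,3m+1}\times I_{0,4}\times I_{0,6n-1}\setminus\bigcup_{i=0}^{m-1}(O\times I_{0,6n-1}+(3i+2,2,0))$. Define $T_{0,i,j}=O\times\alpha_T+(3i-1,2,-6j)$; $T_{1,i,j}=T_{5,i,j}=O\times\beta_T+(3i-3m-3,2,-6j)$; $T_{2,i,j}=O\times\gamma_T+(3i-1,-3,-6j)$; $T_{3,i,j}=O\times\beta_T+(3i+3m+1,2,-6j)$; $T_{4,i,j}=O\times\gamma_T+(3i-1,7,-6j)$. The brick is $B=B_0\cup\bigcup_{i=1}^m\big(T_{0,i,a_i}\cup T_{g(i),i,b_i}\cup T_{g(i)+1,i,c_i}\big)$. *)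

theory Defs
  imports Main
begin

type_synonym pt3 = "int \<times> int \<times> int"

definition padd :: "pt3 \<Rightarrow> pt3 \<Rightarrow> pt3" where
  "padd p q = (case p of (a,b,c) \<Rightarrow> (case q of (x,y,z) \<Rightarrow> (a+x, b+y, c+z)))"

definition p2add :: "int \<times> int \<Rightarrow> int \<times> int \<Rightarrow> int \<times> int" where
  "p2add p q = (fst p + fst q, snd p + snd q)"

definition msum :: "pt3 set \<Rightarrow> pt3 set \<Rightarrow> pt3 set" where
  "msum A B = {padd a b | a b. a \<in> A \<and> b \<in> B}"

definition non_overlapping :: "pt3 set \<Rightarrow> pt3 set \<Rightarrow> bool" where
  "non_overlapping A B \<longleftrightarrow>
     (\<forall>a1\<in>A. \<forall>b1\<in>B. \<forall>a2\<in>A. \<forall>b2\<in>B. padd a1 b1 = padd a2 b2 \<longrightarrow> a1 = a2 \<and> b1 = b2)"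

definition tiles :: "pt3 set \<Rightarrow> pt3 set \<Rightarrow> bool" where
  "tiles P E \<longleftrightarrow> (\<exists>W'. non_overlapping W' P \<and> msum W' P = E)"

definition Zn3 :: "nat \<Rightarrow> pt3 set" where
  "Zn3 n = {(a,b,c). 0 \<le> a \<and> a < int n \<and> 0 \<le> b \<and> b < int n \<and> 0 \<le> c \<and> c < int n}"

definition shiftd :: "nat \<Rightarrow> pt3 \<Rightarrow> int \<Rightarrow> pt3" where
  "shiftd n p k = (case p of (a,b,c) \<Rightarrow> ((a+k) mod int n, (b+k) mod int n, (c+k) mod int n))"

definition cyclic_triomino_set :: "nat \<Rightarrow> (nat \<Rightarrow> pt3 set) \<Rightarrow> bool" where
  "cyclic_triomino_set n S \<longleftrightarrow>
     (\<forall>i\<in>{1..4}. S i \<subseteq> Zn3 n \<and> (\<forall>p k. p \<in> S i \<longrightarrow> shiftd n p k \<in> S i))"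

definition uvec :: "nat \<Rightarrow> int \<times> int" where
  "uvec i = (if i mod 4 = 1 then (1,0) else if i mod 4 = 2 then (0,1)
             else if i mod 4 = 3 then (-1,0) else (0,-1))"

definition triomino_solvable :: "nat \<Rightarrow> (nat \<Rightarrow> pt3 set) \<Rightarrow> bool" where
  "triomino_solvable n S \<longleftrightarrow>
     (\<exists>T :: int \<times> int \<Rightarrow> int. (\<forall>s. 0 \<le> T s \<and> T s < int n) \<and>
        (\<forall>s. \<forall>i\<in>{1..4}. (T s, T (p2add s (uvec i)), T (p2add s (uvec (Suc i)))) \<in> S i))"

text \<open>Kbar j (j in {1..4}) lists the elements of a set of representatives of
  (Z_n^3 - S_j) modulo the diagonal, without repetition.\<close>
definition representatives :: "nat \<Rightarrow> (nat \<Rightarrow> pt3 set) \<Rightarrow> (nat \<Rightarrow> pt3 list) \<Rightarrow> bool" where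
  "representatives n S Kbar \<longleftrightarrow>
     (\<forall>j\<in>{1..4}. distinct (Kbar j) \<and> set (Kbar j) \<subseteq> Zn3 n \<and>
        (\<forall>r1\<in>set (Kbar j). \<forall>r2\<in>set (Kbar j). \<forall>k1\<in>{0..<int n}. \<forall>k2\<in>{0..<int n}.
            shiftd n r1 k1 = shiftd n r2 k2 \<longrightarrow> r1 = r2 \<and> k1 = k2) \<and>
        {shiftd n r k | r k. r \<in> set (Kbar j) \<and> k \<in> {0..<int n}} = Zn3 n - S j)"

text \<open>The list (g(i),(a_i,b_i,c_i)), i = 1..m (stored at list position i-1).\<close>
definition enum_reps :: "(nat \<Rightarrow> pt3 list) \<Rightarrow> (nat \<times> pt3) list" where
  "enum_reps Kbar = concat (map (\<lambda>j. map (\<lambda>t. (j, t)) (Kbar j)) [1,2,3,4])"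

definition alpha :: "nat \<Rightarrow> int set" where "alpha i = (if i = 0 then {} else {0,5})"
definition beta :: "nat \<Rightarrow> int set" where "beta i = (if i = 0 then {1,4} else {})"
definition gamma :: "nat \<Rightarrow> int set" where "gamma i = (if i = 0 then {} else {2,3})"
definition delta :: "nat \<Rightarrow> nat" where "delta i = (if i = 0 then 1 else 0)"

definition blockT :: "(nat \<Rightarrow> int set) \<Rightarrow> nat \<Rightarrow> int set" where
  "blockT X n = (\<Union>i\<in>{0..<n}. (\<lambda>x. int n * x + 6 * int i) ` X (delta i))"

definition Osq :: "(int \<times> int) set" where
  "Osq = ({-1,0,1} \<times> {-1,0,1}) - {(0,0)}"

definition prism :: "int set \<Rightarrow> pt3 \<Rightarrow> pt3 set" where
  "prism A v = {padd (p, q, r) v | p q r. (p,q) \<in> Osq \<and> r \<in> A}"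

definition filler :: "nat \<Rightarrow> pt3 set" where
  "filler n = prism {0, int n} (0,0,0)"

definition empty_brick :: "nat \<Rightarrow> nat \<Rightarrow> pt3 set" where
  "empty_brick n m =
     ({0..3 * int m + 1} \<times> {0..4} \<times> {0..6 * int n - 1})
     - (\<Union>i\<in>{0..<m}. prism {0..6 * int n - 1} (3 * int i + 2, 2, 0))"

definition Tset :: "nat \<Rightarrow> nat \<Rightarrow> nat \<Rightarrow> nat \<Rightarrow> int \<Rightarrow> pt3 set" where
  "Tset n m t i j =
     (if t = 0 then prism (blockT alpha n) (3 * int i - 1, 2, -6 * j)
      else if t = 1 \<or> t = 5 then prism (blockT beta n) (3 * int i - 3 * int m - 3, 2, -6 * j)
      else if t = 2 then prism (blockT gamma n) (3 * int i - 1, -3, -6 * j)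
      else if t = 3 then prism (blockT beta n) (3 * int i + 3 * int m + 1, 2, -6 * j)
      else prism (blockT gamma n) (3 * int i - 1, 7, -6 * j))"

definition brick :: "nat \<Rightarrow> (nat \<times> pt3) list \<Rightarrow> pt3 set" where
  "brick n L =
     (let m = length L in
      empty_brick n m \<union>
      (\<Union>i\<in>{1..m}. (case L ! (i - 1) of (g, (a, b, c)) \<Rightarrow>
          Tset n m 0 i a \<union> Tset n m g i b \<union> Tset n m (g + 1) i c)))"

end

theory Submission
  imports Defs
begin

lemma padd_simp[simp]: "padd (a,b,c) (x,y,z) = (a+x, b+y, c+z)"
  by (simp add: padd_def)

lemma int_m101: "(a::int) \<in> {-1,0,1} \<longleftrightarrow> \<bar>a\<bar> \<le> 1" by auto
lemma Osq_abs: "(a,b) \<in> Osq \<longleftrightarrow> (\<bar>a\<bar> \<le> 1 \<and> \<bar>b\<bar> \<le> 1 \<and> \<not>(a = 0 \<and> b = 0))"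
  unfolding Osq_def Diff_iff mem_Times_iff fst_conv snd_conv singleton_iff int_m101 prod.inject by blast

lemma prism_mem: "(x,y,z) \<in> prism A (vx,vy,vz) \<longleftrightarrow> (x - vx, y - vy) \<in> Osq \<and> z - vz \<in> A"
proof
  assume "(x,y,z) \<in> prism A (vx,vy,vz)"
  then show "(x - vx, y - vy) \<in> Osq \<and> z - vz \<in> A" unfolding prism_def by auto
next
  assume h: "(x - vx, y - vy) \<in> Osq \<and> z - vz \<in> A"
  have "(x,y,z) = padd (x-vx, y-vy, z-vz) (vx,vy,vz)" by simp
  then show "(x,y,z) \<in> prism A (vx,vy,vz)" unfolding prism_def using h by blast
qed

lemma msum_mem: "e \<in> msum A B \<longleftrightarrow> (\<exists>a\<in>A. \<exists>b\<in>B. e = padd a b)"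
  unfolding msum_def by blast

lemma msumI: "a \<in> A \<Longrightarrow> b \<in> B \<Longrightarrow> e = padd a b \<Longrightarrow> e \<in> msum A B"
  unfolding msum_def by blast

lemma filler_mem: "(a,b,c) \<in> filler n \<longleftrightarrow> (a,b) \<in> Osq \<and> (c = 0 \<or> c = int n)"
  unfolding filler_def by (simp add: prism_mem)

lemma Osq_wit: assumes "(a,b) \<in> Osq" shows "\<exists>v1 v2. (v1,v2) \<in> Osq \<and> (a+v1, b+v2) \<in> Osq"
proof (cases "a = 0")
  case True then show ?thesis using assms by (intro exI[of _ 1] exI[of _ 0]) (auto simp: Osq_abs)
next
  case False
  show ?thesis
  proof (cases "b = 0")
    case True then show ?thesis using assms False by (intro exI[of _ 0] exI[of _ 1]) (auto simp: Osq_abs)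
  next
    case False2: False
    then show ?thesis using assms False by (intro exI[of _ "-a"] exI[of _ 0]) (auto simp: Osq_abs)
  qed
qed

lemma lat_arith0: assumes "(K::int) * N = e" "\<bar>e\<bar> < N" shows "K = 0"
proof (rule ccontr)
  assume "K \<noteq> 0"
  then have "1 \<le> \<bar>K\<bar>" by simp
  have "N > 0" using assms by simp
  then have "N \<le> \<bar>K\<bar> * N" using \<open>1 \<le> \<bar>K\<bar>\<close> by simp
  also have "\<dots> = \<bar>K * N\<bar>" using \<open>N>0\<close> by (simp add: abs_mult)
  also have "\<dots> = \<bar>e\<bar>" using assms(1) by simp
  finally show False using assms(2) by simp
qed

lemma lat_arith: assumes "(K::int) * N = 3*d + e" "N = 3*m+2" "\<bar>d\<bar> \<le> m - 1" "\<bar>e\<bar> \<le> 2"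
  shows "K = 0 \<and> d = 0 \<and> e = 0"
proof -
  have "\<bar>3*d+e\<bar> < N" using assms(2-4) by arith
  then have "K = 0" using lat_arith0[OF assms(1)] by simp
  then have "3*d+e = 0" using assms(1) by simp
  then show ?thesis using assms(4) \<open>K=0\<close> by presburger
qed


definition du :: "nat \<Rightarrow> int \<times> int" where "du t = (if t = 0 then (0,0) else uvec t)"
definition blk :: "nat \<Rightarrow> nat \<Rightarrow> int set" where
 "blk n t = (if t = 0 then blockT alpha n else if t = 1 \<or> t = 3 \<or> t = 5 then blockT beta n else blockT gamma n)"
definition selj :: "nat \<Rightarrow> nat \<times> pt3 \<Rightarrow> int" where
 "selj t x = (case x of (g,a,b,c) \<Rightarrow> if t = 0 then a else if t = g then b else c)"

lemma du_bound: "\<bar>fst (du t)\<bar> \<le> 1 \<and> \<bar>snd (du t)\<bar> \<le> 1"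
  unfolding du_def uvec_def by auto

lemma Tset_prism: assumes "t \<le> 5"
  shows "Tset n m t i j = prism (blk n t) (3 * int i - 1 - (3*int m+2) * fst (du t), 2 - 5 * snd (du t), -6*j)"
proof -
  have "t = 0 \<or> t = 1 \<or> t = 2 \<or> t = 3 \<or> t = 4 \<or> t = 5" using assms by auto
  then show ?thesis
    by (elim disjE) (simp_all add: Tset_def blk_def du_def uvec_def algebra_simps)
qed

lemma brick_mem: "q \<in> brick n L \<longleftrightarrow> q \<in> empty_brick n (length L) \<or>
   (\<exists>i\<in>{1..length L}. case L!(i-1) of (g,a,b,c) \<Rightarrow>
      q \<in> Tset n (length L) 0 i a \<or> q \<in> Tset n (length L) g i b \<or> q \<in> Tset n (length L) (g+1) i c)"
  unfolding brick_def Let_def by (auto split: prod.splits)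

lemma cell_in_T:
  assumes "(xq, yq, zq) \<in> Tset n m t i jj" "t \<le> 5" "1 \<le> i" "i \<le> m" "j < m"
    "xq = (X - X') * (3*int m+2) + 3 * int j + 2 + ox" "yq = 5*(Y - Y') + 2 + oy" "\<bar>ox\<bar> \<le> 1" "\<bar>oy\<bar> \<le> 1"
  shows "X' = X + fst (du t) \<and> Y' = Y + snd (du t) \<and> i = Suc j \<and> (ox,oy) \<in> Osq \<and> zq + 6*jj \<in> blk n t"
proof -
  obtain dx dy where d: "du t = (dx,dy)" by force
  have dxb: "\<bar>dx\<bar> \<le> 1" "\<bar>dy\<bar> \<le> 1" using du_bound[of t] d by auto
  define p where "p = xq - (3*int i - 1 - (3*int m+2)*dx)"
  define r where "r = yq - (2 - 5*dy)"
  from assms(1) have P: "(p, r) \<in> Osq" and Z: "zq + 6*jj \<in> blk n t"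
    using Tset_prism[OF assms(2)] d unfolding p_def r_def by (auto simp: prism_mem)
  have pb: "\<bar>p\<bar> \<le> 1" "\<bar>r\<bar> \<le> 1" "\<not>(p=0 \<and> r=0)" using P by (auto simp: Osq_abs)
  have eq1: "(X - X' + dx) * (3*int m+2) = 3*(int i - int j - 1) + (p - ox)"
    using assms(6) unfolding p_def by (simp add: algebra_simps)
  have "\<bar>int i - int j - 1\<bar> \<le> int m - 1" using assms(3-5) by auto
  moreover have "\<bar>p - ox\<bar> \<le> 2" using pb assms(8) by arith
  ultimately have h1: "X - X' + dx = 0 \<and> int i - int j - 1 = 0 \<and> p - ox = 0"
    using lat_arith[OF eq1, of "int m"] by simp
  have eq2: "(Y - Y' + dy) * 5 = r - oy"
    using assms(7) unfolding r_def by (simp add: algebra_simps)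
  have "\<bar>r - oy\<bar> \<le> 2" using pb assms(9) by arith
  then have h2: "Y - Y' + dy = 0 \<and> r = oy" using eq2 by presburger
  show ?thesis using h1 h2 d P Z by auto
qed

lemma cell_in_B0:
  assumes "(xq,yq,zq) \<in> empty_brick n m" "j < m"
    "xq = (X - X') * (3*int m+2) + 3 * int j + 2 + ox" "yq = 5*(Y - Y') + 2 + oy" "\<bar>ox\<bar> \<le> 1" "\<bar>oy\<bar> \<le> 1"
  shows "X' = X \<and> Y' = Y \<and> ox = 0 \<and> oy = 0 \<and> 0 \<le> zq \<and> zq \<le> 6 * int n - 1"
proof -
  have box: "0 \<le> xq" "xq \<le> 3*int m+1" "0 \<le> yq" "yq \<le> 4" "0 \<le> zq" "zq \<le> 6 * int n - 1"
    and np: "(xq,yq,zq) \<notin> prism {0..6 * int n - 1} (3 * int j + 2, 2, 0)"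
    using assms(1,2) unfolding empty_brick_def by auto
  have "(X - X') * (3*int m+2) = xq - 3 * int j - 2 - ox" using assms(3) by simp
  moreover have "\<bar>xq - 3 * int j - 2 - ox\<bar> < 3*int m+2" using box assms(2,5) by arith
  ultimately have X: "X - X' = 0" using lat_arith0 by blast
  have "(Y - Y') * 5 = yq - 2 - oy" using assms(4) by simp
  moreover have "\<bar>yq - 2 - oy\<bar> \<le> 3" using box assms(6) by arith
  ultimately have Y: "Y - Y' = 0" by presburger
  have "ox = 0 \<and> oy = 0"
  proof (rule ccontr)
    assume "\<not> (ox = 0 \<and> oy = 0)"
    then have "(xq,yq,zq) \<in> prism {0..6 * int n - 1} (3 * int j + 2, 2, 0)"
      using X Y assms(3-6) box by (simp add: prism_mem Osq_abs)
    then show False using np by simp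
  qed
  then show ?thesis using X Y box by simp
qed

lemma B0_center: "j < m \<Longrightarrow> 0 \<le> d \<Longrightarrow> d \<le> 6*int n - 1 \<Longrightarrow> (3*int j+2, 2, d) \<in> empty_brick n m"
  unfolding empty_brick_def by (auto simp: prism_mem Osq_abs)

lemma B0_wall: "0 \<le> x \<Longrightarrow> x \<le> 3*int m+1 \<Longrightarrow> 0 \<le> d \<Longrightarrow> d \<le> 6*int n - 1 \<Longrightarrow> (x, 4, d) \<in> empty_brick n m"
  unfolding empty_brick_def by (auto simp: prism_mem Osq_abs)

lemma B0_corner: "0 \<le> d \<Longrightarrow> d \<le> 6*int n - 1 \<Longrightarrow> (0, 0, d) \<in> empty_brick n m"
  unfolding empty_brick_def by (auto simp: prism_mem Osq_abs)


lemma solid_cases: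
  assumes Wl: "W \<subseteq> {((3 * int (length L) + 2) * x, 5 * y, 6 * z) | x y z. True}"
    and gL: "\<forall>k < length L. fst (L!k) \<in> {1..4}"
    and e: "((3 * int (length L) + 2) * X + 3 * int j + 2 + ox, 5*Y + 2 + oy, z) \<in> msum W (brick n L)"
    and j: "j < length L" and ob: "\<bar>ox\<bar> \<le> 1" "\<bar>oy\<bar> \<le> 1"
  shows "(\<exists>wz. ((3 * int (length L) + 2) * X, 5*Y, wz) \<in> W \<and> ox = 0 \<and> oy = 0 \<and> 0 \<le> z - wz \<and> z - wz \<le> 6*int n - 1) \<or>
         ((ox,oy) \<in> Osq \<and> (\<exists>t wz. t \<in> {0, fst (L!j), fst (L!j) + 1} \<and>
            ((3 * int (length L) + 2) * (X + fst (du t)), 5*(Y + snd (du t)), wz) \<in> W \<and> z - wz + 6 * selj t (L!j) \<in> blk n t))"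
proof -
  let ?m = "length L"
  let ?N = "3 * int (length L) + 2"
  from e obtain w q where w: "w \<in> W" and q: "q \<in> brick n L"
    and eq: "(?N * X + 3 * int j + 2 + ox, 5*Y + 2 + oy, z) = padd w q" by (auto simp: msum_mem)
  from w Wl obtain x' y' z' where wd: "w = (?N * x', 5*y', 6*z')" by blast
  obtain q1 q2 q3 where qd: "q = (q1,q2,q3)" by (cases q) auto
  have q1: "q1 = (X - x') * ?N + 3 * int j + 2 + ox" using eq wd qd by (simp add: algebra_simps)
  have q2: "q2 = 5 * (Y - y') + 2 + oy" using eq wd qd by (simp add: algebra_simps)
  have q3: "q3 = z - 6*z'" using eq wd qd by simp
  from q[unfolded brick_mem] show ?thesis
  proof
    assume "q \<in> empty_brick n ?m"
    from cell_in_B0[OF this[unfolded qd] j q1 q2 ob]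
    have c: "x' = X \<and> y' = Y \<and> ox = 0 \<and> oy = 0 \<and> 0 \<le> q3 \<and> q3 \<le> 6 * int n - 1" .
    then have wW: "(?N * X, 5*Y, 6*z') \<in> W" using w wd by simp
    have zz: "0 \<le> z - 6*z'" "z - 6*z' \<le> 6 * int n - 1" using c q3 by linarith+
    have oo: "ox = 0" "oy = 0" using c by simp_all
    show ?thesis
      apply (rule disjI1)
      apply (rule exI[of _ "6*z'"])
      using wW oo zz by (intro conjI) assumption+
  next
    assume that_ex: "\<exists>i\<in>{1..?m}. case L!(i-1) of (g,a,b,c) \<Rightarrow>
      q \<in> Tset n ?m 0 i a \<or> q \<in> Tset n ?m g i b \<or> q \<in> Tset n ?m (g+1) i c"
    obtain i g a b c where i: "i \<in> {1..?m}" and Li: "L!(i-1) = (g,a,b,c)"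
      and qT: "q \<in> Tset n ?m 0 i a \<or> q \<in> Tset n ?m g i b \<or> q \<in> Tset n ?m (g+1) i c"
    proof -
      from that_ex obtain i where i: "i \<in> {1..?m}" and c: "case L!(i-1) of (g,a,b,c) \<Rightarrow>
        q \<in> Tset n ?m 0 i a \<or> q \<in> Tset n ?m g i b \<or> q \<in> Tset n ?m (g+1) i c" by (rule bexE)
      obtain g a b c where eq: "L!(i-1) = (g,a,b,c)" by (rule prod_cases4)
      have c': "q \<in> Tset n ?m 0 i a \<or> q \<in> Tset n ?m g i b \<or> q \<in> Tset n ?m (g+1) i c" using c eq by simp
      show ?thesis by (rule that[OF i eq c'])
    qed
    have g: "g \<in> {1..4}" using gL Li i 
    proof -
      have "i - 1 < ?m" using i by auto
      then have "fst (L!(i-1)) \<in> {1..4}" using gL by blast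
      then show ?thesis using Li by simp
    qed
    have key: "?thesis" if qt: "q \<in> Tset n ?m t i jj" and t: "t \<in> {0,g,g+1}" and jj: "jj = selj t (g,a,b,c)" for t jj
    proof -
      have t5: "t \<le> 5" using t g by auto
      from cell_in_T[OF qt[unfolded qd] t5 _ _ j q1 q2 ob] i
      have c: "x' = X + fst (du t) \<and> y' = Y + snd (du t) \<and> i = Suc j \<and> (ox,oy) \<in> Osq \<and> q3 + 6*jj \<in> blk n t"
        by auto
      then have Lj: "L!j = (g,a,b,c)" using Li by simp
      show ?thesis
        apply (rule disjI2)
        using c Lj t jj q3 wd w by (intro conjI exI[of _ t] exI[of _ "6*z'"]) auto
    qed
    show ?thesis using qT
    proof (elim disjE)
      assume "q \<in> Tset n ?m 0 i a" then show ?thesis by (rule key) (auto simp: selj_def)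
    next
      assume "q \<in> Tset n ?m g i b" then show ?thesis by (rule key) (use g in \<open>auto simp: selj_def\<close>)
    next
      assume "q \<in> Tset n ?m (g+1) i c" then show ?thesis by (rule key) (use g in \<open>auto simp: selj_def\<close>)
    qed
  qed
qed


lemma solid_T:
  assumes w: "((3 * int (length L) + 2) * (X + fst (du t)), 5*(Y + snd (du t)), wz) \<in> W"
    and t: "t \<in> {0, fst (L!j), fst (L!j) + 1}" and g: "fst (L!j) \<in> {1..4}" and j: "j < length L"
    and o: "(ox,oy) \<in> Osq" and z: "z - wz + 6 * selj t (L!j) \<in> blk n t"
  shows "((3 * int (length L) + 2) * X + 3 * int j + 2 + ox, 5*Y + 2 + oy, z) \<in> msum W (brick n L)"
proof -
  let ?N = "3 * int (length L) + 2"
  obtain g' a b c where Lj: "L!j = (g',a,b,c)" by (cases "L!j") auto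
  let ?q = "(3 * int j + 2 + ox - ?N * fst (du t), 2 + oy - 5 * snd (du t), z - wz)"
  have t5: "t \<le> 5" using t g by auto
  have qT: "?q \<in> Tset n (length L) t (Suc j) (selj t (L!j))"
    unfolding Tset_prism[OF t5] prism_mem using o z by (simp add: algebra_simps)
  have qB: "?q \<in> brick n L"
    unfolding brick_mem
    apply (rule disjI2)
    apply (rule bexI[of _ "Suc j"])
    using qT t Lj g j by (auto simp: selj_def)
  have eq: "((3 * int (length L) + 2) * X + 3 * int j + 2 + ox, 5*Y + 2 + oy, z)
     = padd (?N * (X + fst (du t)), 5*(Y + snd (du t)), wz) ?q" by (simp add: algebra_simps)
  show ?thesis by (rule msumI[OF w qB eq])
qed

lemma solid_B0:
  assumes "((3 * int (length L) + 2) * X, 5*Y, wz) \<in> W" "(x', y', z - wz) \<in> empty_brick n (length L)"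
  shows "((3 * int (length L) + 2) * X + x', 5*Y + y', z) \<in> msum W (brick n L)"
proof -
  have b: "(x', y', z - wz) \<in> brick n L" using assms(2) unfolding brick_mem by simp
  have e: "((3 * int (length L) + 2) * X + x', 5*Y + y', z) = padd ((3 * int (length L) + 2) * X, 5*Y, wz) (x', y', z - wz)"
    by simp
  show ?thesis by (rule msumI[OF assms(1) b e])
qed

lemma W_shift_nat:
  assumes P: "(\<lambda>p. padd p (0,0,c)) ` W = W" and w: "(x,y,z) \<in> W"
  shows "(x,y,z + c * int k) \<in> W \<and> (x,y,z - c * int k) \<in> W"
proof (induction k)
  case 0 then show ?case using w by simp
next
  case (Suc k)
  then have a: "(x,y,z + c * int k) \<in> W" and b: "(x,y,z - c * int k) \<in> W" by auto
  have "padd (x,y,z + c * int k) (0,0,c) \<in> (\<lambda>p. padd p (0,0,c)) ` W" by (rule imageI[OF a])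
  then have "padd (x,y,z + c * int k) (0,0,c) \<in> W" using P by simp
  then have 1: "(x,y,z + c * int (Suc k)) \<in> W" by (simp add: algebra_simps)
  from b P have "(x,y,z - c * int k) \<in> (\<lambda>p. padd p (0,0,c)) ` W" by simp
  then obtain p where p0: "p \<in> W" "(x,y,z - c * int k) = padd p (0,0,c)" by (rule imageE)
  then have p: "p \<in> W" "padd p (0,0,c) = (x,y,z - c * int k)" by simp_all
  obtain p1 p2 p3 where "p = (p1,p2,p3)" by (cases p) auto
  with p have "p = (x,y,z - c * int (Suc k))" by (simp add: algebra_simps)
  with p 1 show ?case by simp
qed

lemma W_shift:
  assumes P: "(\<lambda>p. padd p (0,0,c)) ` W = W" and w: "(x,y,z) \<in> W"
  shows "(x,y,z + c * k) \<in> W"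
proof (cases "k \<ge> 0")
  case True
  then show ?thesis using W_shift_nat[OF P w, of "nat k"] by simp
next
  case False
  then show ?thesis using W_shift_nat[OF P w, of "nat (-k)"] by simp
qed

lemma col_unique:
  assumes no: "non_overlapping W (brick n L)" and P: "(\<lambda>p. padd p (0,0,6*int n)) ` W = W"
    and w1: "(x,y,z1) \<in> W" and w2: "(x,y,z2) \<in> W" and n: "n > 0"
  shows "z1 mod (6*int n) = z2 mod (6*int n)"
proof -
  define k where "k = (z2 - z1) div (6*int n)"
  define d where "d = (z2 - z1) mod (6*int n)"
  have w2': "(x,y,z2 + 6*int n * (-k)) \<in> W" by (rule W_shift[OF P w2])
  have "6*int n * k + d = z2 - z1" unfolding k_def d_def by (rule mult_div_mod_eq)
  then have dz: "z2 + 6*int n * (-k) = z1 + d" by simp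
  have d: "0 \<le> d" "d \<le> 6 * int n - 1" unfolding d_def using n by auto
  have b0: "(0,0,0) \<in> brick n L" using B0_corner[of 0 n "length L"] n unfolding brick_mem by simp
  have bd: "(0,0,d) \<in> brick n L" using B0_corner[OF d, of "length L"] unfolding brick_mem by simp
  have pe: "padd (x,y,z2 + 6*int n * (-k)) (0,0,0) = padd (x,y,z1) (0,0,d)" using dz by simp
  then have "(x,y,z2 + 6*int n * (-k)) = (x,y,z1) \<and> (0,0,0) = (0,0,d)"
  proof -
    have h: "\<forall>a1\<in>W. \<forall>b1\<in>brick n L. \<forall>a2\<in>W. \<forall>b2\<in>brick n L. padd a1 b1 = padd a2 b2 \<longrightarrow> a1 = a2 \<and> b1 = b2"
      using no unfolding non_overlapping_def by assumption
    show ?thesis using h w2' b0 w1 bd pe by blast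
  qed
  then have "z2 + 6*int n * (-k) = z1" by simp
  then have "d = 0" using dz by simp
  then have "6*int n dvd (z2 - z1)" unfolding d_def by (simp add: dvd_eq_mod_eq_0)
  then have "6*int n dvd (z1 - z2)" by (metis dvd_minus_iff minus_diff_eq)
  then show ?thesis by (simp add: mod_eq_dvd_iff)
qed

lemma solid_B0_all:
  assumes P: "(\<lambda>p. padd p (0,0,6*int n)) ` W = W" and n: "n > 0"
    and w: "((3 * int (length L) + 2) * X, 5*Y, wz) \<in> W"
    and B: "\<And>d. 0 \<le> d \<Longrightarrow> d \<le> 6*int n - 1 \<Longrightarrow> (x', y', d) \<in> empty_brick n (length L)"
  shows "((3 * int (length L) + 2) * X + x', 5*Y + y', z) \<in> msum W (brick n L)"
proof -
  define k where "k = (z - wz) div (6*int n)"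
  have w': "((3 * int (length L) + 2) * X, 5*Y, wz + 6*int n * k) \<in> W" by (rule W_shift[OF P w])
  have "z - (wz + 6*int n * k) = (z - wz) mod (6*int n)" unfolding k_def
    by (metis diff_diff_eq minus_div_mult_eq_mod mult.commute)
  then have "0 \<le> z - (wz + 6*int n * k)" "z - (wz + 6*int n * k) \<le> 6*int n - 1" using n by auto
  then show ?thesis using solid_B0[OF w' B] by blast
qed

lemma filler_center:
  assumes no: "non_overlapping W' (filler n)" and eqF: "msum W' (filler n) = UNIV - S"
    and w: "(wx,wy,wz) \<in> W'" and f: "(a,b,r) \<in> filler n"
  shows "(wx, wy, wz + r) \<in> S"
proof (rule ccontr)
  assume "(wx, wy, wz + r) \<notin> S"
  then have "(wx, wy, wz + r) \<in> msum W' (filler n)" using eqF by simp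
  then obtain w'' f'' where w'': "w'' \<in> W'" "f'' \<in> filler n" "(wx, wy, wz + r) = padd w'' f''"
    by (auto simp: msum_mem)
  obtain x2 y2 z2 where w2: "w'' = (x2,y2,z2)" by (cases w'') auto
  obtain p q r'' where f2: "f'' = (p,q,r'')" by (cases f'') auto
  have pq: "(p,q) \<in> Osq" "r'' = 0 \<or> r'' = int n" using w''(2) f2 by (auto simp: filler_mem)
  obtain v1 v2 where v: "(v1,v2) \<in> Osq" "(p+v1,q+v2) \<in> Osq" using Osq_wit[OF pq(1)] by blast
  have r: "r = 0 \<or> r = int n" using f by (simp add: filler_mem)
  have "padd (wx,wy,wz) (v1,v2,r) = padd (x2,y2,z2) (p+v1,q+v2,r'')" using w''(3) w2 f2 by simp
  moreover have "(v1,v2,r) \<in> filler n" "(p+v1,q+v2,r'') \<in> filler n" using v r pq by (auto simp: filler_mem)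
  ultimately have "(v1,v2,r) = (p+v1,q+v2,r'')" using no w w''(1) w2 unfolding non_overlapping_def by blast
  then have "p = 0 \<and> q = 0" by simp
  then show False using pq by (simp add: Osq_abs)
qed


lemma occupied:
  assumes Wl: "W \<subseteq> {((3 * int (length L) + 2) * x, 5 * y, 6 * z) | x y z. True}"
    and gL: "\<forall>k < length L. fst (L!k) \<in> {1..4}"
    and no': "non_overlapping W' (filler n)"
    and eqF: "msum W' (filler n) = UNIV - msum W (brick n L)"
    and m: "0 < length L"
  shows "\<exists>wz. ((3 * int (length L) + 2) * X, 5*Y, wz) \<in> W"
proof (rule ccontr)
  let ?N = "3 * int (length L) + 2"
  assume em: "\<not> ?thesis"
  have e1: "(?N * X + 3 * int 0 + 2 + 0, 5*Y + 2 + 0, 0) \<notin> msum W (brick n L)"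
  proof
    assume "(?N * X + 3 * int 0 + 2 + 0, 5*Y + 2 + 0, 0) \<in> msum W (brick n L)"
    from solid_cases[OF Wl gL this m] em show False by (auto simp: Osq_abs)
  qed
  then have "(?N * X + 3 * int 0 + 2 + 0, 5*Y + 2 + 0, 0) \<in> msum W' (filler n)" using eqF by simp
  then obtain w' f where w': "w' \<in> W'" "f \<in> filler n" "(?N * X + 3 * int 0 + 2 + 0, 5*Y + 2 + 0, 0) = padd w' f"
    by (auto simp: msum_mem)
  obtain x1 y1 z1 where wd: "w' = (x1,y1,z1)" by (cases w') auto
  obtain o1 o2 r where fd: "f = (o1,o2,r)" by (cases f) auto
  have fo: "(o1,o2) \<in> Osq" "r = 0 \<or> r = int n" using w'(2) fd by (auto simp: filler_mem)
  have xyz: "x1 = ?N * X + 3 * int 0 + 2 + (-o1)" "y1 = 5*Y + 2 + (-o2)" "z1 + r = 0"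
    using w'(3) wd fd by auto
  have "(x1, y1, z1 + r) \<in> msum W (brick n L)"
    using filler_center[OF no' eqF, of x1 y1 z1 o1 o2 r] w' wd fd by simp
  then have c: "(?N * X + 3 * int 0 + 2 + (-o1), 5*Y + 2 + (-o2), 0) \<in> msum W (brick n L)"
    using xyz by simp
  have ob: "\<bar>-o1\<bar> \<le> 1" "\<bar>-o2\<bar> \<le> 1" using fo by (auto simp: Osq_abs)
  from solid_cases[OF Wl gL c m ob] em obtain t wz where
     mo: "(-o1,-o2) \<in> Osq" and t: "t \<in> {0, fst (L!0), fst (L!0) + 1}"
     and tw: "(?N * (X + fst (du t)), 5*(Y + snd (du t)), wz) \<in> W"
     and tz: "0 - wz + 6 * selj t (L!0) \<in> blk n t" by blast
  obtain v1 v2 where v: "(v1,v2) \<in> Osq" "(-o1+v1,-o2+v2) \<in> Osq" using Osq_wit[OF mo] by blast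
  have g0: "fst (L!0) \<in> {1..4}" using gL m by simp
  have s1: "(?N * X + 3 * int 0 + 2 + (-o1+v1), 5*Y + 2 + (-o2+v2), 0) \<in> msum W (brick n L)"
    using solid_T[OF tw t g0 m v(2) tz] by simp
  have e: "(?N * X + 3 * int 0 + 2 + (-o1+v1), 5*Y + 2 + (-o2+v2), 0) = padd w' (v1,v2,r)"
    using wd xyz by simp
  have f: "(v1,v2,r) \<in> filler n" using v fo by (simp add: filler_mem)
  have "(?N * X + 3 * int 0 + 2 + (-o1+v1), 5*Y + 2 + (-o2+v2), 0) \<in> msum W' (filler n)"
    by (rule msumI[OF w'(1) f e])
  then show False using eqF s1 by simp
qed

lemma blk_no_n:
  assumes v: "v \<in> blk n t" and d: "(v - int n) mod (6 * int n) = 0" and o: "odd n" and n: "n > 0"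
  shows False
proof -
  from v obtain i x where i: "i < n" and vx: "v = int n * x + 6 * int i"
    and x: "(i = 0 \<and> x \<in> {0,5,2,3}) \<or> (i \<noteq> 0 \<and> x \<in> {1,4})"
    unfolding blk_def blockT_def alpha_def beta_def gamma_def delta_def
    by (auto split: if_splits)
  have dv: "6 * int n dvd int n * (x - 1) + 6 * int i" using d vx by (simp add: mod_eq_0_iff_dvd algebra_simps)
  show False using x
  proof (elim disjE conjE)
    assume i0: "i = 0" and x: "x \<in> {0,5,2,3}"
    then obtain q where "int n * (x - 1) = 6 * int n * q" using dv by (auto elim: dvdE)
    then have "int n * (x - 1) = int n * (6 * q)" by (simp add: algebra_simps)
    then have xq: "x - 1 = 6 * q" using n by simp
    from x have "x = 0 \<or> x = 5 \<or> x = 2 \<or> x = 3" by simp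
    then show False using xq by presburger
  next
    assume i0: "i \<noteq> 0" and x: "x \<in> {1,4}"
    show False
    proof (cases "x = 1")
      case True
      then have "6 * int n dvd 6 * int i" using dv by simp
      then have "int n dvd int i" by (simp add: mult_dvd_mono)
      then have "n dvd i" by simp
      then have "n \<le> i" using i0 by (simp add: dvd_imp_le)
      then have "int n \<le> int i" by simp
      then show False using i by simp
    next
      case False
      then have x4: "x = 4" using x by simp
      have d6: "(6::int) dvd 6 * int n" by simp
      have "6 * int n dvd int n * 3 + 6 * int i" using dv x4 by (simp add: algebra_simps)
      then have "6 dvd int n * 3 + 6 * int i" using d6 dvd_trans by blast
      then have "2 dvd int n" by presburger
      then show False using o by simp
    qed
  qed
qed

lemma cong6:
  assumes "Hc mod (int n) = (s + k) mod int n"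
  shows "(6*Hc - 6*s) mod (6*int n) = 6 * (k mod int n)"
proof -
  have "(Hc - s) mod int n = k mod int n" using assms by (metis add_diff_cancel_left' mod_diff_left_eq)
  moreover have "(6*Hc - 6*s) mod (6*int n) = 6 * ((Hc - s) mod int n)"
    by (metis mod_mult_mult1 right_diff_distrib)
  ultimately show ?thesis by simp
qed


lemma modeq_diff0: "a mod c = b mod c \<Longrightarrow> (b - a) mod (c::int) = 0"
  by (metis diff_self mod_0 mod_diff_cong)

lemma set_enum: "set (enum_reps Kbar) = {(j,t) | j t. j \<in> {1,2,3,4} \<and> t \<in> set (Kbar j)}"
  by (auto simp: enum_reps_def)

lemma gamma2: assumes "t = 2 \<or> t = 4" "n > 0" shows "2 * int n \<in> blk n t"
proof -
  have "2 * int n \<in> (\<lambda>x. int n * x + 6 * int 0) ` gamma (delta 0)"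
    by (simp add: gamma_def delta_def)
  then have g: "2 * int n \<in> blockT gamma n" unfolding blockT_def
    by (rule UN_I[rotated]) (use assms(2) in simp)
  have "blk n t = blockT gamma n" using assms(1) unfolding blk_def by auto
  then show ?thesis using g by simp
qed

lemma alpha0: assumes "n > 0" shows "0 \<in> blk n 0"
proof -
  have "0 \<in> (\<lambda>x. int n * x + 6 * int 0) ` alpha (delta 0)"
    by (simp add: alpha_def delta_def)
  then have "0 \<in> blockT alpha n" unfolding blockT_def
    by (rule UN_I[rotated]) (use assms in simp)
  then show ?thesis unfolding blk_def by simp
qed

theorem lemma4p3:
  fixes n :: nat and S :: "nat \<Rightarrow> pt3 set" and Kbar :: "nat \<Rightarrow> pt3 list" and W :: "pt3 set"
  assumes "cyclic_triomino_set n S"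
    and "gcd n 6 = 1"
    and "representatives n S Kbar"
    and "W \<subseteq> {((3 * int (length (enum_reps Kbar)) + 2) * x, 5 * y, 6 * z) | x y z. True}"
    and "(\<lambda>p. padd p (0, 0, 6 * int n)) ` W = W"
    and "non_overlapping W (brick n (enum_reps Kbar))"
    and "tiles (filler n) (UNIV - msum W (brick n (enum_reps Kbar)))"
  shows "triomino_solvable n S"
proof -
  let ?L = "enum_reps Kbar"
  let ?N = "3 * int (length (enum_reps Kbar)) + 2"
  have n0: "n > 0"
  proof (rule ccontr)
    assume "\<not> n > 0" then have "n = 0" by simp
    then show False using assms(2) by simp
  qed
  have odd: "odd n"
  proof
    assume "even n"
    then have "2 dvd gcd n 6" by simp
    then show False using assms(2) by simp
  qed
  have gL: "\<forall>k < length ?L. fst (?L!k) \<in> {1..4}"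
  proof (intro allI impI)
    fix k assume "k < length ?L"
    then have "?L!k \<in> set ?L" by simp
    then show "fst (?L!k) \<in> {1..4}" unfolding set_enum by auto
  qed
  from assms(7) obtain W' where no': "non_overlapping W' (filler n)"
    and eqF: "msum W' (filler n) = UNIV - msum W (brick n ?L)" unfolding tiles_def by blast
  define hgt where "hgt = (\<lambda>X Y. SOME wz. (?N*X, 5*Y, wz) \<in> W)"
  define T where "T = (\<lambda>s. (hgt (fst s) (snd s) div 6) mod int n)"
  have hgt_in: "(?N*X, 5*Y, hgt X Y) \<in> W" if m: "0 < length ?L" for X Y
    unfolding hgt_def by (rule someI_ex[OF occupied[OF assms(4) gL no' eqF m]])
  have h6: "\<exists>H. h = 6*H" if "(?N*X, 5*Y, h) \<in> W" for X Y h
    using that assms(4) by auto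
  have Trange: "0 \<le> T s \<and> T s < int n" for s unfolding T_def using n0 by simp
  show ?thesis unfolding triomino_solvable_def
  proof (intro exI[of _ T] conjI allI ballI)
    fix s show "0 \<le> T s" using Trange by blast
  next
    fix s show "T s < int n" using Trange by blast
  next
    fix s i assume i: "i \<in> {1..4::nat}"
    show "(T s, T (p2add s (uvec i)), T (p2add s (uvec (Suc i)))) \<in> S i"
    proof (rule ccontr)
      assume nS: "(T s, T (p2add s (uvec i)), T (p2add s (uvec (Suc i)))) \<notin> S i"
      obtain X Y where s: "s = (X,Y)" by force
      have tripZ: "(T s, T (p2add s (uvec i)), T (p2add s (uvec (Suc i)))) \<in> Zn3 n"
        unfolding Zn3_def using Trange by simp
      have rep: "{shiftd n r k | r k. r \<in> set (Kbar i) \<and> k \<in> {0..<int n}} = Zn3 n - S i"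
        using conjunct2[OF conjunct2[OF conjunct2[OF bspec[OF assms(3)[unfolded representatives_def] i]]]] .
      have "(T s, T (p2add s (uvec i)), T (p2add s (uvec (Suc i)))) \<in> Zn3 n - S i"
        using tripZ nS by (rule DiffI)
      then have "(T s, T (p2add s (uvec i)), T (p2add s (uvec (Suc i)))) \<in> {shiftd n r k | r k. r \<in> set (Kbar i) \<and> k \<in> {0..<int n}}"
        using rep by simp
      then obtain r k where rk: "r \<in> set (Kbar i)" "k \<in> {0..<int n}"
        "shiftd n r k = (T s, T (p2add s (uvec i)), T (p2add s (uvec (Suc i))))"
        unfolding mem_Collect_eq by metis
      obtain a b c where r: "r = (a,b,c)" by (cases r) auto
      have i4: "i \<in> {1,2,3,4}" using i by auto
      have "(i, r) \<in> set ?L" unfolding set_enum using i4 rk(1) by blast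
      then obtain j where j: "j < length ?L" "?L ! j = (i, (a,b,c))" using r by (auto simp: in_set_conv_nth)
      have m: "0 < length ?L" using j(1) by (rule le_less_trans[OF le0])
      have i0: "i \<noteq> 0" using i by simp
      have Tv: "T s = (a+k) mod int n" "T (p2add s (uvec i)) = (b+k) mod int n"
        "T (p2add s (uvec (Suc i))) = (c+k) mod int n" using rk(3) r by (auto simp: shiftd_def)
      have pu: "p2add s (uvec i) = (X + fst (du i), Y + snd (du i))"
        "p2add s (uvec (Suc i)) = (X + fst (du (Suc i)), Y + snd (du (Suc i)))"
        using s i0 by (auto simp: p2add_def du_def)
      have key: "(wz - 6 * selj t (?L!j)) mod (6*int n) = 6 * (k mod int n)"
        if t: "t \<in> {0, i, i+1}" and w: "(?N * (X + fst (du t)), 5*(Y + snd (du t)), wz) \<in> W" for t wz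
      proof -
        let ?X = "X + fst (du t)" and ?Y = "Y + snd (du t)"
        have hin: "(?N*?X, 5*?Y, hgt ?X ?Y) \<in> W" using hgt_in[OF m] by blast
        have u: "wz mod (6*int n) = hgt ?X ?Y mod (6*int n)"
          using col_unique[OF assms(6) assms(5) w hin n0] .
        obtain H where H: "hgt ?X ?Y = 6*H" using h6[OF hin] by blast
        have TH: "T (?X, ?Y) = H mod int n" unfolding T_def using H by simp
        have "H mod int n = (selj t (?L!j) + k) mod int n"
        proof -
          have "t = 0 \<or> t = i \<or> t = Suc i" using t by auto
          then show ?thesis
          proof (elim disjE)
            assume t0: "t = 0"
            then have "T (?X, ?Y) = T s" using s by (simp add: du_def)
            then show ?thesis using TH Tv t0 j by (simp add: selj_def)
          next
            assume ti: "t = i"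
            then have "T (?X, ?Y) = T (p2add s (uvec i))" using pu by simp
            then show ?thesis using TH Tv ti j i0 by (simp add: selj_def)
          next
            assume ti: "t = Suc i"
            then have "T (?X, ?Y) = T (p2add s (uvec (Suc i)))" using pu by simp
            then show ?thesis using TH Tv ti j i0 by (simp add: selj_def)
          qed
        qed
        from cong6[OF this] have "(6*H - 6 * selj t (?L!j)) mod (6*int n) = 6 * (k mod int n)" .
        moreover have "(wz - 6 * selj t (?L!j)) mod (6*int n) = (6*H - 6 * selj t (?L!j)) mod (6*int n)"
          using u H by (metis mod_diff_cong)
        ultimately show ?thesis by simp
      qed
      define base where "base = hgt X Y - 6*a"
      have hXY: "(?N * (X + fst (du 0)), 5*(Y + snd (du 0)), hgt X Y) \<in> W"
        using hgt_in[OF m] by (simp add: du_def)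
      have kb: "base mod (6*int n) = 6 * (k mod int n)"
        using key[OF _ hXY] j unfolding base_def by (simp add: selj_def)
      have pfree: "(?N*X + 3*int j + 2 + 0, 5*Y + 2 + 1, base + int n) \<notin> msum W (brick n ?L)"
      proof
        assume "(?N*X + 3*int j + 2 + 0, 5*Y + 2 + 1, base + int n) \<in> msum W (brick n ?L)"
        from solid_cases[OF assms(4) gL this j(1)] obtain t wz where
          t: "t \<in> {0, fst (?L!j), fst (?L!j) + 1}"
          and tw: "(?N * (X + fst (du t)), 5*(Y + snd (du t)), wz) \<in> W"
          and tz: "base + int n - wz + 6 * selj t (?L!j) \<in> blk n t" by auto
        have "(wz - 6 * selj t (?L!j)) mod (6*int n) = 6 * (k mod int n)"
          using key[OF _ tw] t j by simp
        then have "(wz - 6 * selj t (?L!j)) mod (6*int n) = base mod (6*int n)" using kb by simp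
        then have "(base - (wz - 6 * selj t (?L!j))) mod (6*int n) = 0"
          by (rule modeq_diff0)
        then have "((base + int n - wz + 6 * selj t (?L!j)) - int n) mod (6*int n) = 0"
          by (simp add: algebra_simps)
        then show False by (rule blk_no_n[OF tz _ odd n0])
      qed
      then have "(?N*X + 3*int j + 2 + 0, 5*Y + 2 + 1, base + int n) \<in> msum W' (filler n)" using eqF by simp
      then obtain w' f where w': "w' \<in> W'" "f \<in> filler n"
        "(?N*X + 3*int j + 2 + 0, 5*Y + 2 + 1, base + int n) = padd w' f"
        by (auto simp: msum_mem)
      obtain x1 y1 z1 where wd: "w' = (x1,y1,z1)" by (cases w') auto
      obtain o1 o2 rr where fd: "f = (o1,o2,rr)" by (cases f) auto
      have fo: "(o1,o2) \<in> Osq" "rr = 0 \<or> rr = int n" using w'(2) fd by (auto simp: filler_mem)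
      have xyz: "x1 = ?N*X + 3*int j + 2 - o1" "y1 = 5*Y + 3 - o2" "z1 + rr = base + int n"
        using w'(3) wd fd by auto
      have free: "padd (x1,y1,z1) f' \<notin> msum W (brick n ?L)" if "f' \<in> filler n" for f'
      proof
        assume a1: "padd (x1,y1,z1) f' \<in> msum W (brick n ?L)"
        have "padd (x1,y1,z1) f' \<in> msum W' (filler n)" using msumI[OF w'(1) that] wd by simp
        then show False using eqF a1 by simp
      qed
      have colsolid: "(?N*X + x', 5*Y + y', z) \<in> msum W (brick n ?L)"
        if "\<And>d. 0 \<le> d \<Longrightarrow> d \<le> 6*int n - 1 \<Longrightarrow> (x',y',d) \<in> empty_brick n (length ?L)" for x' y' z
        using solid_B0_all[OF assms(5) n0 hgt_in[OF m] that] by blast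
      have gj: "fst (?L!j) \<in> {1..4}" using gL j by blast
      show False
      proof (cases "o1 = 0 \<and> o2 = 1")
        case True
        show False using fo(2)
        proof
          assume r0: "rr = 0"
          define tg where "tg = (if even i then i else Suc i)"
          have tg: "tg \<in> {0, i, i+1}" unfolding tg_def by auto
          have tg24: "tg = 2 \<or> tg = 4" using i4 unfolding tg_def by auto
          let ?X = "X + fst (du tg)" and ?Y = "Y + snd (du tg)"
          have hin: "(?N*?X, 5*?Y, hgt ?X ?Y) \<in> W" using hgt_in[OF m] by blast
          have "(hgt ?X ?Y - 6 * selj tg (?L!j)) mod (6*int n) = 6 * (k mod int n)" using key[OF tg hin] .
          then have "(hgt ?X ?Y - 6 * selj tg (?L!j)) mod (6*int n) = base mod (6*int n)"
            using kb by simp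
          then have "(base - (hgt ?X ?Y - 6 * selj tg (?L!j))) mod (6*int n) = 0"
            by (rule modeq_diff0)
          then have "(base + 6 * selj tg (?L!j) - hgt ?X ?Y) mod (6*int n) = 0"
            by (simp add: algebra_simps)
          then obtain q where q: "base + 6 * selj tg (?L!j) - hgt ?X ?Y = 6*int n * q" by (auto elim: dvdE)
          have wt: "(?N*?X, 5*?Y, base + 6 * selj tg (?L!j)) \<in> W"
            using W_shift[OF assms(5) hin, of q] q by (simp add: algebra_simps)
          have tg': "tg \<in> {0, fst (?L!j), fst (?L!j) + 1}" using tg j by simp
          have "(base + 2*int n) - (base + 6 * selj tg (?L!j)) + 6 * selj tg (?L!j) \<in> blk n tg"
            using gamma2[OF tg24 n0] by simp
          from solid_T[OF wt tg' gj j(1) _ this, of 0 1]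
          have "(?N*X + 3*int j + 2 + 0, 5*Y + 2 + 1, base + 2*int n) \<in> msum W (brick n ?L)" by (simp add: Osq_abs)
          moreover have "padd (x1,y1,z1) (0,1,int n) = (?N*X + 3*int j + 2 + 0, 5*Y + 2 + 1, base + 2*int n)"
            using xyz True r0 by simp
          moreover have "(0,1,int n) \<in> filler n" by (simp add: filler_mem Osq_abs)
          ultimately show False using free by metis
        next
          assume rn: "rr = int n"
          have "(base) - (hgt X Y) + 6 * selj 0 (?L!j) \<in> blk n 0"
            using alpha0[OF n0] j unfolding base_def by (simp add: selj_def)
          from solid_T[OF hXY _ gj j(1) _ this, of 0 1]
          have "(?N*X + 3*int j + 2 + 0, 5*Y + 2 + 1, base) \<in> msum W (brick n ?L)" by (simp add: Osq_abs)
          moreover have "padd (x1,y1,z1) (0,1,0) = (?N*X + 3*int j + 2 + 0, 5*Y + 2 + 1, base)"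
            using xyz True rn by simp
          moreover have "(0,1,0) \<in> filler n" by (simp add: filler_mem Osq_abs)
          ultimately show False using free by metis
        qed
      next
        case False
        have ob: "\<bar>o1\<bar> \<le> 1" "\<bar>o2\<bar> \<le> 1" using fo(1) by (auto simp: Osq_abs)
        have rr: "rr = 0 \<or> rr = int n" by (rule fo(2))
        consider (A) "o2 \<ge> 0" | (B) "o2 = -1" "o1 \<noteq> 0" | (C) "o2 = -1" "o1 = 0" using ob by arith
        then show False
        proof cases
          case A
          have f': "(o1, o2 - 1, rr) \<in> filler n" using A False ob rr by (auto simp: filler_mem Osq_abs)
          have s: "(?N*X + (3*int j + 2), 5*Y + 2, base + int n) \<in> msum W (brick n ?L)"
            by (rule colsolid) (rule B0_center, use j in auto)
          have e: "padd (x1,y1,z1) (o1, o2 - 1, rr) = (?N*X + (3*int j + 2), 5*Y + 2, base + int n)"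
            using xyz by simp
          have "padd (x1,y1,z1) (o1, o2 - 1, rr) \<in> msum W (brick n ?L)" unfolding e by (rule s)
          with free[OF f'] show False by contradiction
        next
          case B
          have f': "(o1, 0, rr) \<in> filler n" using B ob rr by (auto simp: filler_mem Osq_abs)
          have s: "(?N*X + (3*int j + 2), 5*Y + 4, base + int n) \<in> msum W (brick n ?L)"
            by (rule colsolid) (rule B0_wall, use j in auto)
          have e: "padd (x1,y1,z1) (o1, 0, rr) = (?N*X + (3*int j + 2), 5*Y + 4, base + int n)"
            using xyz B by simp
          have "padd (x1,y1,z1) (o1, 0, rr) \<in> msum W (brick n ?L)" unfolding e by (rule s)
          with free[OF f'] show False by contradiction
        next
          case C
          have f': "(1, 0, rr) \<in> filler n" using rr by (auto simp: filler_mem Osq_abs)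
          have s: "(?N*X + (3*int j + 3), 5*Y + 4, base + int n) \<in> msum W (brick n ?L)"
            by (rule colsolid) (rule B0_wall, use j in auto)
          have e: "padd (x1,y1,z1) (1, 0, rr) = (?N*X + (3*int j + 3), 5*Y + 4, base + int n)"
            using xyz C by simp
          have "padd (x1,y1,z1) (1, 0, rr) \<in> msum W (brick n ?L)" unfolding e by (rule s)
          with free[OF f'] show False by contradiction
        qed
      qed
    qed
  qed
qed

end
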